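(* For $p,q>0$, $x\ge0$ and $0\le y\le 1$, $$B_{p,q}(x,y)=B_{p,q+1}(x,y)-\frac{e^{-x/2}}{qB(p,q)}\,y^p(1-y)^q M\!\left(p+q,p,\tfrac12xy\right),$$ and the same identity holds for $\bar B_{p,q}(x,y)$ with the sign of the last term reversed. Moreover, if in addition $p>1$, then $$B_{p,q}(x,y)=B_{p-1,q+1}(x,y)-\frac{e^{-x/2}}{qB(p,q)}\,y^{p-1}(1-y)^q M\!\left(p+q,p,\tfrac12xy\right).$$
   Context: For $p,q>0$ and $0\le y\le 1$, $I_y(p,q)=\frac{1}{B(p,q)}\int_0^y t^{p-1}(1-t)^{q-1}\,dt$ is the regularized incomplete beta function, with $B(p,q)=\Gamma(p)\Gamma(q)/\Gamma(p+q)$. The cumulative noncentral beta distribution is $B_{p,q}(x,y)=e^{-x/2}\sum_{j=0}^\infty \frac{1}{j!}\left(\frac x2\right)^j I_y(p+j,q)$ for $x\ge0$, and its complement is $\bar B_{p,q}(x,y)=1-B_{p,q}(x,y)$. $M(a,b,z)=\sum_{n\ge0}\frac{(a)_n}{(b)_n}\frac{z^n}{n!}$ is Kummer's confluent hypergeometric function, and $(a)_n$ is the Pochhammer symbol. *)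

theory Defs
  imports "HOL-Analysis.Analysis"
begin

definition inc_beta_reg :: "real \<Rightarrow> real \<Rightarrow> real \<Rightarrow> real" where
  "inc_beta_reg y p q =
     (LBINT t=0..y. t powr (p - 1) * (1 - t) powr (q - 1)) / Beta p q"

definition nc_beta_cdf :: "real \<Rightarrow> real \<Rightarrow> real \<Rightarrow> real \<Rightarrow> real" where
  "nc_beta_cdf p q x y =
     exp (- x / 2) * (\<Sum>j. (1 / fact j) * (x / 2) ^ j * inc_beta_reg y (p + real j) q)"

definition nc_beta_ccdf :: "real \<Rightarrow> real \<Rightarrow> real \<Rightarrow> real \<Rightarrow> real" where
  "nc_beta_ccdf p q x y = 1 - nc_beta_cdf p q x y"

definition kummerM :: "real \<Rightarrow> real \<Rightarrow> real \<Rightarrow> real" where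
  "kummerM a b z = (\<Sum>n. pochhammer a n / pochhammer b n * z ^ n / fact n)"

end

theory Submission
  imports Defs
begin


definition gB :: "real \<Rightarrow> real \<Rightarrow> real \<Rightarrow> real" where
  "gB a b t = t powr (a - 1) * (1 - t) powr (b - 1)"

lemma gB_integrable:
  fixes a b y :: real
  assumes "a > 0" "b > 0" "0 \<le> y" "y \<le> 1"
  shows "set_integrable lborel {0<..<y} (gB a b)"
proof -
  have "set_integrable lborel {0..1} (gB a b)"
    using integrable_Beta[OF assms(1,2)] unfolding gB_def by simp
  then show ?thesis
    by (rule set_integrable_subset) (use assms in auto)
qed

lemma gB_nonneg: "0 \<le> gB a b t"
  unfolding gB_def by simp

lemma J_bounds:
  fixes a b y :: real
  assumes "a > 0" "b > 0" "0 \<le> y" "y \<le> 1"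
  shows "0 \<le> (LBINT t=0..y. gB a b t) \<and> (LBINT t=0..y. gB a b t) \<le> Beta a b"
proof -
  have eq: "(LBINT t=0..y. gB a b t) = (LINT t:{0<..<y}|lborel. gB a b t)"
    using assms by (subst interval_lebesgue_integral_le_eq) (auto simp: zero_ereal_def)
  have i1: "set_integrable lborel {0<..<y} (gB a b)" by (rule gB_integrable[OF assms])
  have i2: "set_integrable lborel {0..1} (gB a b)"
    using integrable_Beta[OF assms(1,2)] unfolding gB_def by simp
  have B: "(LINT t:{0..1}|lborel. gB a b t) = Beta a b"
    using set_borel_integral_eq_integral(2)[OF i2] has_integral_Beta_real[OF assms(1,2)]
    unfolding gB_def by (simp add: integral_unique)
  have "(LINT t:{0<..<y}|lborel. gB a b t) \<le> (LINT t:{0..1}|lborel. gB a b t)"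
    unfolding set_lebesgue_integral_def
    apply (rule integral_mono)
    using i1 i2 unfolding set_integrable_def apply auto
    using assms by (auto simp: indicator_def gB_nonneg)
  moreover have "0 \<le> (LINT t:{0<..<y}|lborel. gB a b t)"
    unfolding set_lebesgue_integral_def
    by (rule integral_nonneg_AE) (auto simp: indicator_def gB_nonneg)
  ultimately show ?thesis using eq B by simp
qed

lemma ftc:
  fixes al be y :: real
  assumes "0 < y" "y \<le> 1" "al > 0" "be > 0"
    and int: "set_integrable lborel {0<..<y} f"
    and der: "\<And>t. 0 < t \<Longrightarrow> t < y \<Longrightarrow> ((\<lambda>t. t powr al * (1 - t) powr be) has_real_derivative f t) (at t)"
    and cont: "\<And>t. 0 < t \<Longrightarrow> t < y \<Longrightarrow> isCont f t"
  shows "(LBINT t=0..y. f t) = y powr al * (1 - y) powr be"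
proof -
  let ?F = "\<lambda>t::real. t powr al * (1 - t) powr be"
  have "(LBINT t=ereal 0..ereal y. f t) = y powr al * (1 - y) powr be - 0"
  proof (rule interval_integral_FTC_integrable[where F = ?F])
    show "ereal 0 < ereal y" using assms by simp
    show "(?F has_vector_derivative f x) (at x)" if "ereal 0 < ereal x" "ereal x < ereal y" for x
      using der[of x] that by (simp add: has_real_derivative_iff_has_vector_derivative)
    show "isCont f x" if "ereal 0 < ereal x" "ereal x < ereal y" for x
      using cont[of x] that by simp
    show "set_integrable lborel (einterval (ereal 0) (ereal y)) f" using int by simp
    have "(?F \<longlongrightarrow> 0 powr al * (1 - 0) powr be) (at_right 0)"
      apply (intro tendsto_intros tendsto_powr')
      using assms by (auto intro: eventually_mono[OF eventually_at_right_less] simp: less_imp_le)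
    then show "((?F \<circ> real_of_ereal) \<longlongrightarrow> 0) (at_right (ereal 0))"
      by (simp add: ereal_tendsto_simps1)
    have ev: "\<forall>\<^sub>F t in at_left y. 0 \<le> 1 - t"
      using assms(2) by (auto simp: eventually_at_filter)
    have "(?F \<longlongrightarrow> y powr al * (1 - y) powr be) (at_left y)"
      apply (intro tendsto_intros tendsto_powr')
      using assms ev by auto
    then show "((?F \<circ> real_of_ereal) \<longlongrightarrow> y powr al * (1 - y) powr be) (at_left (ereal y))"
      by (simp add: ereal_tendsto_simps1)
  qed
  then show ?thesis by (simp add: zero_ereal_def)
qed

lemma LBINT_set:
  fixes y :: real assumes "0 \<le> y"
  shows "(LBINT t=0..y. f t) = (LINT t:{0<..<y}|lborel. f t)"
  using assms by (subst interval_lebesgue_integral_le_eq) (auto simp: zero_ereal_def)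

lemma inc_beta_J: "inc_beta_reg y a b = (LINT t:{0<..<y}|lborel. gB a b t) / Beta a b"
  if "0 \<le> y" for y a b :: real
  unfolding inc_beta_reg_def gB_def LBINT_set[OF that] ..

lemma Beta_pos: "a > 0 \<Longrightarrow> b > 0 \<Longrightarrow> Beta a b > (0::real)"
  unfolding Beta_def by simp

lemma not_npi: "(b::real) > 0 \<Longrightarrow> b \<notin> \<int>\<^sub>\<le>\<^sub>0"
  using nonpos_Ints_nonpos by fastforce

lemma alg:
  fixes J1 J0 B1 B0 P c b :: real
  assumes "c * J1 - b * J0 = P" "c * B1 = b * B0" "B0 > 0" "B1 > 0" "b > 0"
  shows "J1 / B1 = J0 / B0 + P / (b * B0)"
proof -
  have "c \<noteq> 0" using assms by (metis mult_eq_0_iff less_irrefl mult_pos_pos)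
  then have "J1 / B1 = (c * J1) / (c * B1)" by simp
  also have "\<dots> = (P + b * J0) / (b * B0)" using assms by simp
  also have "\<dots> = J0 / B0 + P / (b * B0)" using assms by (simp add: field_simps)
  finally show ?thesis .
qed

lemma rec1:
  fixes a b y :: real
  assumes a: "a > 0" and b: "b > 0" and y: "0 < y" "y \<le> 1"
  shows "inc_beta_reg y a (b + 1) = inc_beta_reg y a b + y powr a * (1 - y) powr b / (b * Beta a b)"
proof -
  let ?J = "\<lambda>a b. (LINT t:{0<..<y}|lborel. gB a b t)"
  have i1: "set_integrable lborel {0<..<y} (gB a (b+1))" using gB_integrable a b y by auto
  have i2: "set_integrable lborel {0<..<y} (gB a b)" using gB_integrable a b y by auto
  have "(LBINT t=0..y. (a+b) * gB a (b+1) t - b * gB a b t) = y powr a * (1 - y) powr b"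
  proof (rule ftc[OF y a b])
    show "set_integrable lborel {0<..<y} (\<lambda>t. (a+b) * gB a (b+1) t - b * gB a b t)"
      using i1 i2 by (intro set_integral_diff set_integrable_mult_right) auto
    fix t :: real assume t: "0 < t" "t < y"
    then have t1: "t < 1" using y by simp
    show "isCont (\<lambda>t. (a+b) * gB a (b+1) t - b * gB a b t) t"
      unfolding gB_def using t t1 by (intro continuous_intros) auto
    have e1: "t powr (a - 1) = t powr a / t" using t by (simp add: powr_diff)
    have e2: "(1 - t) powr (b - 1) = (1 - t) powr b / (1 - t)" using t1 by (simp add: powr_diff)
    show "((\<lambda>t. t powr a * (1 - t) powr b) has_real_derivative (a+b) * gB a (b+1) t - b * gB a b t) (at t)"
      unfolding gB_def using t t1
      apply -
      apply (rule derivative_eq_intros refl | simp)+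
      apply (simp add: e1 e2 field_simps)
      done
  qed
  then have "(a+b) * ?J a (b+1) - b * ?J a b = y powr a * (1 - y) powr b"
    using i1 i2 y by (simp add: LBINT_set)
  moreover have "(a+b) * Beta a (b+1) = b * Beta a b" using Beta_plus1_right[OF not_npi[OF b]] by simp
  moreover have "Beta a b > 0" using Beta_pos a b by simp
  moreover have "Beta a (b+1) > 0" using Beta_pos a b by simp
  ultimately show ?thesis using y a b
    unfolding inc_beta_J[of y, OF less_imp_le[OF y(1)]]
    by (intro alg) auto
qed

lemma rec2:
  fixes a b y :: real
  assumes a: "a > 1" and b: "b > 0" and y: "0 < y" "y \<le> 1"
  shows "inc_beta_reg y (a - 1) (b + 1) = inc_beta_reg y a b + y powr (a - 1) * (1 - y) powr b / (b * Beta a b)"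
proof -
  let ?J = "\<lambda>a b. (LINT t:{0<..<y}|lborel. gB a b t)"
  have a0: "a - 1 > 0" "a > 0" using a by auto
  have i1: "set_integrable lborel {0<..<y} (gB (a-1) (b+1))" using gB_integrable a0 b y by auto
  have i2: "set_integrable lborel {0<..<y} (gB a b)" using gB_integrable a0 b y by auto
  have "(LBINT t=0..y. (a-1) * gB (a-1) (b+1) t - b * gB a b t) = y powr (a-1) * (1 - y) powr b"
  proof (rule ftc[OF y a0(1) b])
    show "set_integrable lborel {0<..<y} (\<lambda>t. (a-1) * gB (a-1) (b+1) t - b * gB a b t)"
      using i1 i2 by (intro set_integral_diff set_integrable_mult_right) auto
    fix t :: real assume t: "0 < t" "t < y"
    then have t1: "t < 1" using y by simp
    show "isCont (\<lambda>t. (a-1) * gB (a-1) (b+1) t - b * gB a b t) t"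
      unfolding gB_def using t t1 by (intro continuous_intros) auto
    have e1: "t powr (a - 1 - 1) = t powr (a - 1) / t" using t by (simp add: powr_diff field_simps power2_eq_square)
    have e2: "(1 - t) powr (b - 1) = (1 - t) powr b / (1 - t)" using t1 by (simp add: powr_diff)
    show "((\<lambda>t. t powr (a-1) * (1 - t) powr b) has_real_derivative (a-1) * gB (a-1) (b+1) t - b * gB a b t) (at t)"
      unfolding gB_def using t t1
      apply -
      apply (rule derivative_eq_intros refl | simp)+
      done
  qed
  then have "(a-1) * ?J (a-1) (b+1) - b * ?J a b = y powr (a-1) * (1 - y) powr b"
    using i1 i2 y by (simp add: LBINT_set)
  moreover have "(a-1) * Beta (a-1) (b+1) = b * Beta a b"
  proof -
    have "(a - 1 + (b+1)) * Beta (a - 1 + 1) (b+1) = (a-1) * Beta (a-1) (b+1)"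
      by (rule Beta_plus1_left[OF not_npi[OF a0(1)]])
    moreover have "(a + b) * Beta a (b+1) = b * Beta a b" using Beta_plus1_right[OF not_npi[OF b]] by simp
    ultimately show ?thesis by (simp add: algebra_simps)
  qed
  moreover have "Beta a b > 0" using Beta_pos a0 b by simp
  moreover have "Beta (a-1) (b+1) > 0" using Beta_pos a0 b by simp
  ultimately show ?thesis using y a b
    unfolding inc_beta_J[of y, OF less_imp_le[OF y(1)]]
    by (intro alg) auto
qed



lemma inc_bounds:
  fixes a b y :: real
  assumes "a > 0" "b > 0" "0 \<le> y" "y \<le> 1"
  shows "0 \<le> inc_beta_reg y a b \<and> inc_beta_reg y a b \<le> 1"
proof -
  have e: "inc_beta_reg y a b = (LBINT t=0..y. gB a b t) / Beta a b"
    unfolding inc_beta_reg_def gB_def ..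
  have j: "0 \<le> (LBINT t=0..y. gB a b t)" "(LBINT t=0..y. gB a b t) \<le> Beta a b"
    using J_bounds[OF assms] by auto
  have B: "Beta a b > 0" using Beta_pos[OF assms(1,2)] .
  show ?thesis unfolding e using j B by (simp add: divide_le_eq_1)
qed

lemma summ_c: "summable (\<lambda>j. (1 / fact j) * (x / 2) ^ j :: real)"
proof -
  have "summable (\<lambda>n. inverse (fact n) * (x/2)^n :: real)" by (rule summable_exp)
  then show ?thesis by (simp add: inverse_eq_divide)
qed

lemma summ_I:
  fixes p q x y :: real
  assumes "p > 0" "q > 0" "x \<ge> 0" "0 \<le> y" "y \<le> 1"
  shows "summable (\<lambda>j. (1 / fact j) * (x / 2) ^ j * inc_beta_reg y (p + real j) q)"
proof (rule summable_comparison_test[OF _ summ_c[of x]])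
  show "\<exists>N. \<forall>n\<ge>N. norm ((1 / fact n) * (x / 2) ^ n * inc_beta_reg y (p + real n) q) \<le> (1 / fact n) * (x / 2) ^ n"
  proof (intro exI allI impI)
    fix n :: nat
    have b: "0 \<le> inc_beta_reg y (p + real n) q \<and> inc_beta_reg y (p + real n) q \<le> 1"
      using inc_bounds assms by simp
    have c: "0 \<le> (1 / fact n) * (x / 2) ^ n" using assms by simp
    show "norm ((1 / fact n) * (x / 2) ^ n * inc_beta_reg y (p + real n) q) \<le> (1 / fact n) * (x / 2) ^ n"
    proof -
      have "norm ((1 / fact n) * (x / 2) ^ n * inc_beta_reg y (p + real n) q) = (1 / fact n) * (x / 2) ^ n * inc_beta_reg y (p + real n) q"
        using b c by (simp only: real_norm_def abs_of_nonneg mult_nonneg_nonneg)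
      also have "\<dots> \<le> (1 / fact n) * (x / 2) ^ n" using b c by (intro mult_left_le) auto
      finally show ?thesis .
    qed
  qed
qed



lemma Beta_shift:
  fixes p q :: real
  assumes "p > 0" "q > 0"
  shows "Beta (p + real j) q * pochhammer (p + q) j = Beta p q * pochhammer p j"
proof -
  have g1: "pochhammer p j = Gamma (p + real j) / Gamma p"
    using pochhammer_Gamma[OF not_npi[OF assms(1)]] by simp
  have g2: "pochhammer (p + q) j = Gamma (p + q + real j) / Gamma (p + q)"
    using pochhammer_Gamma[of "p+q"] not_npi[of "p+q"] assms by simp
  have "Gamma (p + real j + q) = Gamma (p + q + real j)" by (simp add: add_ac)
  moreover have "Gamma (p + real j + q) > 0" "Gamma (p+q) > 0" "Gamma p > 0"
    using assms by auto
  ultimately show ?thesis unfolding Beta_def g1 g2 by (simp add: field_simps)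
qed

lemma suminf_cmult':
  fixes K :: real
  assumes "summable (\<lambda>j. K * m j)"
  shows "(\<Sum>j. K * m j) = K * suminf m"
proof (cases "K = 0")
  case True then show ?thesis by simp
next
  case False
  then have "summable m" using assms summable_cmult_iff by blast
  then show ?thesis by (rule suminf_mult)
qed

lemma alg2: fixes pp pq B f q X Ye Yj Q :: real
  shows "pp>0 \<Longrightarrow> pq>0 \<Longrightarrow> B>0 \<Longrightarrow> f>0 \<Longrightarrow> q>0 \<Longrightarrow> 1/f * X * (Ye * Yj * Q / (q * (B * pp / pq))) = Ye*Q/(q*B) * (pq/pp * (X*Yj)/f)"
  by (simp add: field_simps)

lemma series_kummer:
  fixes p q x y e :: real
  assumes "p > 0" "q > 0" "0 < y"
    and summ: "summable (\<lambda>j. (1 / fact j) * (x / 2) ^ j * (y powr (e + real j) * (1 - y) powr q / (q * Beta (p + real j) q)))"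
  shows "(\<Sum>j. (1 / fact j) * (x / 2) ^ j * (y powr (e + real j) * (1 - y) powr q / (q * Beta (p + real j) q)))
    = y powr e * (1 - y) powr q / (q * Beta p q) * kummerM (p + q) p (x * y / 2)"
proof -
  let ?K = "y powr e * (1 - y) powr q / (q * Beta p q)"
  have eq: "(1 / fact j) * (x / 2) ^ j * (y powr (e + real j) * (1 - y) powr q / (q * Beta (p + real j) q))
     = ?K * (pochhammer (p + q) j / pochhammer p j * (x * y / 2) ^ j / fact j)" for j
  proof -
    have sh: "Beta (p + real j) q = Beta p q * pochhammer p j / pochhammer (p + q) j"
      using Beta_shift[OF assms(1,2), of j] pochhammer_pos[of "p+q" j] assms
      by (simp add: field_simps)
    have yp: "y powr (e + real j) = y powr e * y ^ j"
      using assms by (simp add: powr_add powr_realpow)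
    have pos: "pochhammer p j > 0" "pochhammer (p+q) j > 0" "Beta p q > 0" "fact j > (0::real)"
      using pochhammer_pos[of p j] pochhammer_pos[of "p+q" j] Beta_pos[OF assms(1,2)] assms by auto
    have xy: "(x * y / 2) ^ j = (x / 2) ^ j * y ^ j" proof -
      have "x * y / 2 = (x / 2) * y" by simp
      then show ?thesis by (simp only: power_mult_distrib)
    qed
    show ?thesis unfolding sh yp xy using pos assms
      by (intro alg2) auto
  qed
  show ?thesis unfolding eq kummerM_def
    by (rule suminf_cmult') (use summ eq in simp)
qed



lemma combine:
  fixes A B C :: "nat \<Rightarrow> real"
  assumes eq: "\<And>j. A j = B j - C j" and sA: "summable A" and sB: "summable B" and R: "suminf C = R"
  shows "suminf A = suminf B - R"
proof -
  have C: "C = (\<lambda>j. B j - A j)" using eq by (auto simp: fun_eq_iff)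
  have sC: "summable C" unfolding C by (rule summable_diff[OF sB sA])
  have "A = (\<lambda>j. B j - C j)" using eq by (auto simp: fun_eq_iff)
  then have "suminf A = suminf (\<lambda>j. B j - C j)" by simp
  also have "\<dots> = suminf B - suminf C" by (rule suminf_diff[OF sB sC, symmetric])
  finally show ?thesis using R by simp
qed

lemma inc0: "inc_beta_reg 0 a b = 0"
  by (simp add: inc_beta_reg_def zero_ereal_def[symmetric])

theorem mainTheorem4:
  fixes p q x y :: real
  assumes "p > 0" and "q > 0" and "x \<ge> 0" and "0 \<le> y" and "y \<le> 1"
  shows "(nc_beta_cdf p q x y =
           nc_beta_cdf p (q + 1) x y
           - exp (- x / 2) / (q * Beta p q) * y powr p * (1 - y) powr q
             * kummerM (p + q) p (x * y / 2))
       \<and> (nc_beta_ccdf p q x y =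
           nc_beta_ccdf p (q + 1) x y
           + exp (- x / 2) / (q * Beta p q) * y powr p * (1 - y) powr q
             * kummerM (p + q) p (x * y / 2))
       \<and> (p > 1 \<longrightarrow> nc_beta_cdf p q x y =
           nc_beta_cdf (p - 1) (q + 1) x y
           - exp (- x / 2) / (q * Beta p q) * y powr (p - 1) * (1 - y) powr q
             * kummerM (p + q) p (x * y / 2))"
proof (cases "y = 0")
  case True
  have z: "nc_beta_cdf a b x 0 = 0" for a b
    unfolding nc_beta_cdf_def by (simp add: inc0)
  show ?thesis using True by (simp add: z nc_beta_ccdf_def)
next
  case False
  then have y0: "0 < y" using assms by simp
  define c where "c = (\<lambda>j::nat. (1 / fact j) * (x / 2) ^ j :: real)"
  have cdf: "nc_beta_cdf a b x y = exp (- x / 2) * (\<Sum>j. c j * inc_beta_reg y (a + real j) b)" for a b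
    unfolding nc_beta_cdf_def c_def ..
  have sI: "summable (\<lambda>j. c j * inc_beta_reg y (a + real j) b)" if "a > 0" "b > 0" for a b
    unfolding c_def using summ_I[of a b x y] that assms by simp
  have P1: "nc_beta_cdf p q x y =
           nc_beta_cdf p (q + 1) x y
           - exp (- x / 2) / (q * Beta p q) * y powr p * (1 - y) powr q
             * kummerM (p + q) p (x * y / 2)"
  proof -
    have s: "(\<Sum>j. c j * inc_beta_reg y (p + real j) q) =
        (\<Sum>j. c j * inc_beta_reg y (p + real j) (q + 1)) -
        y powr p * (1 - y) powr q / (q * Beta p q) * kummerM (p + q) p (x * y / 2)"
    proof (rule combine)
      fix j :: nat
      show "c j * inc_beta_reg y (p + real j) q = c j * inc_beta_reg y (p + real j) (q + 1)
          - c j * (y powr (p + real j) * (1 - y) powr q / (q * Beta (p + real j) q))"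
        using rec1[of "p + real j" q y] assms y0 by (simp add: algebra_simps)
    next
      show "summable (\<lambda>j. c j * inc_beta_reg y (p + real j) q)" using sI assms by simp
      show "summable (\<lambda>j. c j * inc_beta_reg y (p + real j) (q + 1))" using sI assms by simp
    next
      have sB: "summable (\<lambda>j. c j * inc_beta_reg y (p + real j) (q + 1))" using sI assms by simp
      have sA: "summable (\<lambda>j. c j * inc_beta_reg y (p + real j) q)" using sI assms by simp
      have eqC: "(\<lambda>j. c j * (y powr (p + real j) * (1 - y) powr q / (q * Beta (p + real j) q)))
          = (\<lambda>j. c j * inc_beta_reg y (p + real j) (q + 1) - c j * inc_beta_reg y (p + real j) q)"
        using rec1[of "p + real _" q y] assms y0 by (auto simp: fun_eq_iff algebra_simps)
      have "summable (\<lambda>j. c j * (y powr (p + real j) * (1 - y) powr q / (q * Beta (p + real j) q)))"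
        unfolding eqC by (rule summable_diff[OF sB sA])
      then show "(\<Sum>j. c j * (y powr (p + real j) * (1 - y) powr q / (q * Beta (p + real j) q))) =
          y powr p * (1 - y) powr q / (q * Beta p q) * kummerM (p + q) p (x * y / 2)"
        unfolding c_def by (rule series_kummer[OF assms(1,2) y0])
    qed
    show ?thesis unfolding cdf s by (simp add: algebra_simps)
  qed
  moreover have P2: "nc_beta_ccdf p q x y =
           nc_beta_ccdf p (q + 1) x y
           + exp (- x / 2) / (q * Beta p q) * y powr p * (1 - y) powr q
             * kummerM (p + q) p (x * y / 2)"
    unfolding nc_beta_ccdf_def using P1 by simp
  moreover have P3: "nc_beta_cdf p q x y =
           nc_beta_cdf (p - 1) (q + 1) x y
           - exp (- x / 2) / (q * Beta p q) * y powr (p - 1) * (1 - y) powr q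
             * kummerM (p + q) p (x * y / 2)" if p1: "p > 1"
  proof -
    have r: "inc_beta_reg y (p - 1 + real j) (q + 1) = inc_beta_reg y (p + real j) q
        + y powr (p - 1 + real j) * (1 - y) powr q / (q * Beta (p + real j) q)" for j
    proof -
      have e: "p + real j - 1 = p - 1 + real j" by simp
      show ?thesis using rec2[of "p + real j" q y] p1 assms y0 unfolding e by simp
    qed
    have s: "(\<Sum>j. c j * inc_beta_reg y (p + real j) q) =
        (\<Sum>j. c j * inc_beta_reg y (p - 1 + real j) (q + 1)) -
        y powr (p - 1) * (1 - y) powr q / (q * Beta p q) * kummerM (p + q) p (x * y / 2)"
    proof (rule combine)
      fix j :: nat
      show "c j * inc_beta_reg y (p + real j) q = c j * inc_beta_reg y (p - 1 + real j) (q + 1)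
          - c j * (y powr (p - 1 + real j) * (1 - y) powr q / (q * Beta (p + real j) q))"
        using r[of j] by (simp add: algebra_simps)
    next
      show "summable (\<lambda>j. c j * inc_beta_reg y (p + real j) q)" using sI assms by simp
      show "summable (\<lambda>j. c j * inc_beta_reg y (p - 1 + real j) (q + 1))" using sI assms p1 by simp
    next
      have sB: "summable (\<lambda>j. c j * inc_beta_reg y (p - 1 + real j) (q + 1))" using sI assms p1 by simp
      have sA: "summable (\<lambda>j. c j * inc_beta_reg y (p + real j) q)" using sI assms by simp
      have eqC: "(\<lambda>j. c j * (y powr (p - 1 + real j) * (1 - y) powr q / (q * Beta (p + real j) q)))
          = (\<lambda>j. c j * inc_beta_reg y (p - 1 + real j) (q + 1) - c j * inc_beta_reg y (p + real j) q)"
        using r by (auto simp: fun_eq_iff algebra_simps)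
      have "summable (\<lambda>j. c j * (y powr (p - 1 + real j) * (1 - y) powr q / (q * Beta (p + real j) q)))"
        unfolding eqC by (rule summable_diff[OF sB sA])
      then show "(\<Sum>j. c j * (y powr (p - 1 + real j) * (1 - y) powr q / (q * Beta (p + real j) q))) =
          y powr (p - 1) * (1 - y) powr q / (q * Beta p q) * kummerM (p + q) p (x * y / 2)"
        unfolding c_def by (rule series_kummer[OF assms(1,2) y0])
    qed
    show ?thesis unfolding cdf s by (simp add: algebra_simps)
  qed
  ultimately show ?thesis by blast
qed


end
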